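(* Suppose block indices are drawn independently and uniformly at random from $[n]$ (one draw per subroutine call by a worker), and an iteration is completed once updates for $\tau$ distinct blocks have been collected (updates for an already-collected block being overwritten/redundant). Then: (i) the expected number of subroutine calls (draws) needed to complete an iteration is $\tau+\sum_{i=1}^{\tau-1}\frac{i}{n-i}$; (ii) if $0.02n<\tau<0.6n$, then with probability at least $1-\exp(-n/60)$, no more than $2\tau$ draws suffice to complete an iteration. *)

theory Defs
  imports "HOL-Probability.Probability"
begin

text \<open>Block indices are drawn i.i.d. uniformly from [n], relabelled as {0..<n}.
  An outcome is an infinite stream of draws.\<close>
definition draw_space :: "nat \<Rightarrow> nat stream measure" where
  "draw_space n = stream_space (measure_pmf (pmf_of_set {..<n}))"

definition draws_to_complete :: "nat \<Rightarrow> nat stream \<Rightarrow> nat" where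
  "draws_to_complete tau \<omega> = (LEAST t. card (set (stake t \<omega>)) = tau)"

end

theory Submission
  imports Defs
begin

lemma meas_stake_fun:
  "(\<lambda>\<omega>. f (stake t \<omega>)) \<in> measurable (draw_space n) (count_space UNIV)"
  unfolding draw_space_def by measurable

lemma meas_stake_fun_borel:
  "(\<lambda>\<omega>. f (stake t \<omega>) :: ennreal) \<in> borel_measurable (draw_space n)"
  unfolding draw_space_def by measurable

lemma meas_T: "draws_to_complete tau \<in> measurable (draw_space n) (count_space UNIV)"
  unfolding draws_to_complete_def draw_space_def by measurable

lemma space_draw[simp]: "space (draw_space n) = UNIV"
  unfolding draw_space_def by (simp add: space_stream_space)

lemma prob_draw: "prob_space (draw_space n)"
  unfolding draw_space_def by (rule prob_space.prob_space_stream_space[OF prob_space_measure_pmf])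

fun R :: "nat \<Rightarrow> nat \<Rightarrow> nat \<Rightarrow> nat \<Rightarrow> real" where
  "R n tau 0 s = (if s < tau then 1 else 0)"
| "R n tau (Suc t) s = real s / real n * R n tau t s + (real n - real s) / real n * R n tau t (Suc s)"

lemma R_zero: "tau \<le> s \<Longrightarrow> R n tau t s = 0"
  by (induction t arbitrary: s) auto

lemma R_nonneg: "tau \<le> n \<Longrightarrow> 0 \<le> R n tau t s"
proof (induction t arbitrary: s)
  case 0 then show ?case by simp
next
  case (Suc t)
  show ?case
  proof (cases "s < tau")
    case True
    then have "real s \<le> real n" using Suc.prems by simp
    then show ?thesis using Suc by (auto intro!: add_nonneg_nonneg mult_nonneg_nonneg divide_nonneg_nonneg)
  next
    case False then show ?thesis using R_zero[of tau s n "Suc t"] by simp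
  qed
qed

lemma sum_split_A:
  assumes "A \<subseteq> {..<n}"
  shows "(\<Sum>x<n. f (card (insert x A))) = real (card A) * f (card A) + (real n - real (card A)) * f (Suc (card A))"
proof -
  have fA: "finite A" using assms finite_subset by blast
  have "(\<Sum>x<n. f (card (insert x A))) = (\<Sum>x\<in>A. f (card (insert x A))) + (\<Sum>x\<in>{..<n}-A. f (card (insert x A)))"
    using assms by (metis finite_lessThan sum.subset_diff add.commute)
  also have "(\<Sum>x\<in>A. f (card (insert x A))) = (\<Sum>x\<in>A. f (card A))"
    by (rule sum.cong) (auto simp: insert_absorb)
  also have "(\<Sum>x\<in>{..<n}-A. f (card (insert x A))) = (\<Sum>x\<in>{..<n}-A. f (Suc (card A)))"
    by (rule sum.cong) (auto simp: fA)
  also have "card ({..<n}-A) = n - card A" using assms fA by (simp add: card_Diff_subset)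
  moreover have "card A \<le> n" using assms by (metis card_lessThan card_mono finite_lessThan)
  ultimately show ?thesis by (simp add: of_nat_diff)
qed

lemma sets_stake: "{\<omega>. P (stake t \<omega>)} \<in> sets (stream_space (measure_pmf (p :: nat pmf)))"
proof -
  have "(\<lambda>\<omega>. P (stake t \<omega>)) \<in> measurable (stream_space (count_space UNIV)) (count_space UNIV)"
    by (rule measurable_compose[OF measurable_stake]) simp
  then have "Measurable.pred (stream_space (measure_pmf p)) (\<lambda>\<omega>. P (stake t \<omega>))"
    by (simp cong: measurable_cong_sets add: sets_stream_space_cong)
  then have "{\<omega>\<in>space (stream_space (measure_pmf p)). P (stake t \<omega>)} \<in> sets (stream_space (measure_pmf p))"
    by (simp add: pred_def)
  then show ?thesis by (simp add: space_stream_space)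
qed

lemma key:
  assumes n: "0 < n" and tn: "tau \<le> n"
  shows "A \<subseteq> {..<n} \<Longrightarrow>
    emeasure (draw_space n) {\<omega>. card (A \<union> set (stake t \<omega>)) < tau} = ennreal (R n tau t (card A))"
proof (induction t arbitrary: A)
  case 0
  interpret S: prob_space "draw_space n" by (rule prob_draw)
  show ?case
  proof (cases "card A < tau")
    case True
    then have "{\<omega>. card (A \<union> set (stake 0 \<omega>)) < tau} = space (draw_space n)" by simp
    then show ?thesis using True S.emeasure_space_1 by simp
  next
    case False
    then show ?thesis by simp
  qed
next
  case (Suc t)
  let ?M = "measure_pmf (pmf_of_set {..<n})"
  have ne: "{..<n} \<noteq> {}" using n by auto
  have X: "{\<omega>. card (A \<union> set (stake (Suc t) \<omega>)) < tau} \<in> sets (stream_space ?M)"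
    by (rule sets_stake)
  have "emeasure (draw_space n) {\<omega>. card (A \<union> set (stake (Suc t) \<omega>)) < tau}
      = (\<integral>\<^sup>+x. emeasure (stream_space ?M) {\<omega>\<in>space (stream_space ?M). x ## \<omega> \<in> {\<omega>. card (A \<union> set (stake (Suc t) \<omega>)) < tau}} \<partial>?M)"
    unfolding draw_space_def by (rule prob_space.emeasure_stream_space[OF prob_space_measure_pmf X])
  also have "\<dots> = (\<integral>\<^sup>+x. emeasure (draw_space n) {\<omega>. card (insert x A \<union> set (stake t \<omega>)) < tau} \<partial>?M)"
    by (simp add: draw_space_def space_stream_space)
  also have "\<dots> = (\<Sum>x<n. emeasure (draw_space n) {\<omega>. card (insert x A \<union> set (stake t \<omega>)) < tau}) / card {..<n}"
    by (rule nn_integral_pmf_of_set[OF ne]) simp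
  also have "\<dots> = (\<Sum>x<n. ennreal (R n tau t (card (insert x A)))) / n"
  proof -
    have "(\<Sum>x<n. emeasure (draw_space n) {\<omega>. card (insert x A \<union> set (stake t \<omega>)) < tau})
        = (\<Sum>x<n. ennreal (R n tau t (card (insert x A))))"
      by (rule sum.cong[OF refl], rule Suc.IH) (use Suc.prems in auto)
    then show ?thesis by (simp only: card_lessThan)
  qed
  also have "\<dots> = ennreal ((\<Sum>x<n. R n tau t (card (insert x A))) / n)"
  proof -
    have "(\<Sum>x<n. ennreal (R n tau t (card (insert x A)))) = ennreal (\<Sum>x<n. R n tau t (card (insert x A)))"
      by (rule sum_ennreal) (rule R_nonneg[OF tn])
    moreover have "(of_nat n :: ennreal) = ennreal (real n)" by (rule ennreal_of_nat_eq_real_of_nat)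
    moreover have "0 \<le> (\<Sum>x<n. R n tau t (card (insert x A)))" by (rule sum_nonneg) (rule R_nonneg[OF tn])
    ultimately show ?thesis using n by (simp only: divide_ennreal of_nat_0_less_iff)
  qed
  also have "(\<Sum>x<n. R n tau t (card (insert x A))) / n = R n tau (Suc t) (card A)"
    using sum_split_A[OF Suc.prems, of "R n tau t"] by (simp add: add_divide_distrib)
  finally show ?case .
qed

definition F :: "nat \<Rightarrow> nat \<Rightarrow> real \<Rightarrow> nat \<Rightarrow> real" where
  "F n tau y s = (\<Prod>j\<in>{s..<tau}. (1 - real j / real n) / (y - real j / real n))"

lemma F_ge1:
  assumes "y \<le> 1" "\<And>j. j < tau \<Longrightarrow> real j / real n < y"
  shows "1 \<le> F n tau y s"
  unfolding F_def
proof (rule prod_ge_1)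
  fix j assume "j \<in> {s..<tau}"
  then have "real j / real n < y" using assms(2) by auto
  then show "1 \<le> (1 - real j / real n) / (y - real j / real n)"
    using assms(1) by (simp add: field_simps)
qed

lemma F_step:
  assumes "s < tau"
  shows "F n tau y s = (1 - real s / real n) / (y - real s / real n) * F n tau y (Suc s)"
  unfolding F_def using assms by (simp add: prod.atLeast_Suc_lessThan)

lemma R_chernoff:
  assumes n: "0 < n" and tn: "tau \<le> n" and y1: "y \<le> 1" and y0: "0 < y"
    and yj: "\<And>j. j < tau \<Longrightarrow> real j / real n < y"
  shows "R n tau t s \<le> F n tau y s * y ^ t"
proof (induction t arbitrary: s)
  case 0
  have "1 \<le> F n tau y s" by (rule F_ge1[OF y1 yj])
  then show ?case by simp
next
  case (Suc t)
  have F1: "\<And>s. 1 \<le> F n tau y s" using F_ge1[OF y1 yj] by blast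
  show ?case
  proof (cases "s < tau")
    case False
    then have "R n tau (Suc t) s = 0" by (simp add: R_zero)
    moreover have "0 \<le> F n tau y s * y ^ Suc t" using F1[of s] y0 by (simp add: less_imp_le)
    ultimately show ?thesis by simp
  next
    case True
    define a where "a = real s / real n"
    have sn: "real s < real n" using True tn by simp
    have a0: "0 \<le> a" "a < 1" using n sn by (auto simp: a_def field_simps)
    have ya: "a < y" using yj[OF True] by (simp add: a_def)
    have b: "(real n - real s) / real n = 1 - a" using n by (simp add: a_def field_simps)
    have "R n tau (Suc t) s = a * R n tau t s + (1 - a) * R n tau t (Suc s)"
      using b by (simp add: a_def)
    also have "\<dots> \<le> a * (F n tau y s * y ^ t) + (1 - a) * (F n tau y (Suc s) * y ^ t)"
      using a0 Suc.IH by (intro add_mono mult_left_mono) auto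
    also have "(1 - a) * F n tau y (Suc s) = (y - a) * F n tau y s"
      using F_step[OF True, of n y] ya a0 by (simp add: a_def[symmetric] field_simps)
    then have "a * (F n tau y s * y ^ t) + (1 - a) * (F n tau y (Suc s) * y ^ t)
        = F n tau y s * y ^ Suc t"
    proof -
      assume h: "(1 - a) * F n tau y (Suc s) = (y - a) * F n tau y s"
      have "a * (F n tau y s * y ^ t) + (1 - a) * (F n tau y (Suc s) * y ^ t)
          = y ^ t * (a * F n tau y s + (1 - a) * F n tau y (Suc s))" by (simp add: algebra_simps)
      also have "\<dots> = y ^ t * (a * F n tau y s + (y - a) * F n tau y s)" using h by simp
      also have "\<dots> = F n tau y s * y ^ Suc t" by (simp add: algebra_simps)
      finally show ?thesis .
    qed
    finally show ?thesis .
  qed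
qed

lemma R_summable:
  assumes n: "0 < n" and tn: "tau \<le> n"
  shows "summable (\<lambda>t. R n tau t s)"
proof (cases "tau = 0")
  case True
  then show ?thesis by (simp add: R_zero)
next
  case False
  define y where "y = (2 * real tau - 1) / (2 * real n)"
  have y0: "0 < y" using False n by (simp add: y_def)
  have y1: "y < 1" using tn n by (simp add: y_def field_simps)
  have yj: "\<And>j. j < tau \<Longrightarrow> real j / real n < y"
    using n by (auto simp: y_def field_simps)
  show ?thesis
  proof (rule summable_comparison_test)
    show "\<exists>N. \<forall>t\<ge>N. norm (R n tau t s) \<le> F n tau y s * y ^ t"
      using R_chernoff[OF n tn _ y0 yj] y1 R_nonneg[OF tn] by auto
    show "summable (\<lambda>t. F n tau y s * y ^ t)"
      using y0 y1 by (intro summable_mult summable_geometric) simp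
  qed
qed

definition E :: "nat \<Rightarrow> nat \<Rightarrow> nat \<Rightarrow> real" where
  "E n tau s = (\<Sum>t. R n tau t s)"

lemma E_step:
  assumes n: "0 < n" and tn: "tau \<le> n" and s: "s < tau"
  shows "E n tau s = real n / (real n - real s) + E n tau (Suc s)"
proof -
  let ?a = "real s / real n" and ?b = "(real n - real s) / real n"
  have S1: "summable (\<lambda>t. R n tau t s)" and S2: "summable (\<lambda>t. R n tau t (Suc s))"
    using R_summable[OF n tn] by auto
  have "E n tau s = R n tau 0 s + (\<Sum>t. R n tau (Suc t) s)"
    unfolding E_def using suminf_split_head[OF S1] by simp
  also have "(\<Sum>t. R n tau (Suc t) s) = (\<Sum>t. ?a * R n tau t s + ?b * R n tau t (Suc s))"
    by simp
  also have "\<dots> = ?a * E n tau s + ?b * E n tau (Suc s)"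
  proof -
    have "(\<Sum>t. ?a * R n tau t s + ?b * R n tau t (Suc s)) = (\<Sum>t. ?a * R n tau t s) + (\<Sum>t. ?b * R n tau t (Suc s))"
      by (rule suminf_add[symmetric]) (auto intro!: summable_mult S1 S2)
    moreover have "(\<Sum>t. ?a * R n tau t s) = ?a * E n tau s" unfolding E_def by (rule suminf_mult[OF S1])
    moreover have "(\<Sum>t. ?b * R n tau t (Suc s)) = ?b * E n tau (Suc s)" unfolding E_def by (rule suminf_mult[OF S2])
    ultimately show ?thesis by simp
  qed
  finally have eq: "E n tau s = 1 + ?a * E n tau s + ?b * E n tau (Suc s)" using s by simp
  have sn: "real s < real n" using s tn by simp
  have nz: "real n \<noteq> 0" using n by simp
  have "real n * E n tau s = real n * (1 + ?a * E n tau s + ?b * E n tau (Suc s))"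
    using eq by simp
  also have "\<dots> = real n + real s * E n tau s + (real n - real s) * E n tau (Suc s)"
    using nz by (simp add: distrib_left)
  finally have "(real n - real s) * E n tau s = real n + (real n - real s) * E n tau (Suc s)"
    by (simp add: algebra_simps)
  then show ?thesis using sn by (simp add: field_simps)
qed

lemma E_formula:
  assumes n: "0 < n" and tn: "tau \<le> n"
  shows "s \<le> tau \<Longrightarrow> E n tau s = (\<Sum>i\<in>{s..<tau}. real n / (real n - real i))"
proof (induction s rule: inc_induct)
  case base
  then show ?case by (simp add: E_def R_zero)
next
  case (step m)
  then show ?case using E_step[OF n tn step.hyps(2)] by (simp add: sum.atLeast_Suc_lessThan)
qed

lemma c_mono: "t \<le> t' \<Longrightarrow> card (set (stake t \<omega>)) \<le> card (set (stake t' \<omega>))"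
proof -
  assume "t \<le> t'"
  then have "stake t' \<omega> = stake t \<omega> @ stake (t' - t) (sdrop t \<omega>)" by (simp add: stake_add)
  then have "set (stake t \<omega>) \<subseteq> set (stake t' \<omega>)" by (metis set_append Un_upper1)
  then show ?thesis by (simp add: card_mono)
qed

lemma c_Suc: "card (set (stake (Suc t) \<omega>)) \<le> Suc (card (set (stake t \<omega>)))"
  unfolding stake_Suc by (simp add: card_insert_if)

lemma c_ivt: "tau \<le> card (set (stake m \<omega>)) \<Longrightarrow> \<exists>t\<le>m. card (set (stake t \<omega>)) = tau"
proof (induction m)
  case 0 then show ?case by simp
next
  case (Suc m)
  show ?case
  proof (cases "tau \<le> card (set (stake m \<omega>))")
    case True then show ?thesis using Suc.IH le_SucI by blast
  next
    case False
    then have "card (set (stake (Suc m) \<omega>)) = tau" using Suc.prems c_Suc[of m \<omega>] by linarith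
    then show ?thesis by blast
  qed
qed

lemma T_le: "tau \<le> card (set (stake m \<omega>)) \<Longrightarrow> draws_to_complete tau \<omega> \<le> m"
proof -
  assume "tau \<le> card (set (stake m \<omega>))"
  then obtain t where t: "t \<le> m" "card (set (stake t \<omega>)) = tau" using c_ivt by blast
  have "draws_to_complete tau \<omega> \<le> t" unfolding draws_to_complete_def by (rule Least_le) (rule t(2))
  then show ?thesis using t(1) by simp
qed

lemma T_gt:
  assumes "\<exists>t. card (set (stake t \<omega>)) = tau"
  shows "m < draws_to_complete tau \<omega> \<longleftrightarrow> card (set (stake m \<omega>)) < tau"
proof
  assume "m < draws_to_complete tau \<omega>"
  show "card (set (stake m \<omega>)) < tau"
  proof (rule ccontr)
    assume "\<not> card (set (stake m \<omega>)) < tau"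
    then have "tau \<le> card (set (stake m \<omega>))" by simp
    then have "draws_to_complete tau \<omega> \<le> m" by (rule T_le)
    with \<open>m < draws_to_complete tau \<omega>\<close> show False by simp
  qed
next
  assume a: "card (set (stake m \<omega>)) < tau"
  have "card (set (stake (draws_to_complete tau \<omega>) \<omega>)) = tau"
    unfolding draws_to_complete_def using assms by (rule LeastI_ex)
  show "m < draws_to_complete tau \<omega>"
  proof (rule ccontr)
    assume "\<not> m < draws_to_complete tau \<omega>"
    then have "draws_to_complete tau \<omega> \<le> m" by simp
    then have "card (set (stake (draws_to_complete tau \<omega>) \<omega>)) \<le> card (set (stake m \<omega>))" by (rule c_mono)
    then show False using a \<open>card (set (stake (draws_to_complete tau \<omega>) \<omega>)) = tau\<close> by simp
  qed
qed

lemma T_meas_fun: "(\<lambda>\<omega>. g (draws_to_complete tau \<omega>) :: ennreal) \<in> borel_measurable (draw_space n)"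
  by (rule measurable_compose[OF meas_T]) simp

lemma key0:
  assumes n: "0 < n" and tn: "tau \<le> n"
  shows "emeasure (draw_space n) {\<omega>. card (set (stake t \<omega>)) < tau} = ennreal (R n tau t 0)"
  using key[OF n tn, of "{}" t] by simp

lemma sets_c: "{\<omega>. P (stake t \<omega>)} \<in> sets (draw_space n)"
  unfolding draw_space_def by (rule sets_stake)

lemma AE_reach:
  assumes n: "0 < n" and tn: "tau \<le> n"
  shows "AE \<omega> in draw_space n. \<exists>t. card (set (stake t \<omega>)) = tau"
proof -
  define N where "N = {\<omega>::nat stream. \<forall>t. card (set (stake t \<omega>)) < tau}"
  have Nm: "N \<in> sets (draw_space n)"
  proof -
    have "Measurable.pred (draw_space n) (\<lambda>\<omega>. \<forall>t. card (set (stake t \<omega>)) < tau)"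
      unfolding draw_space_def by measurable
    then show ?thesis by (simp add: pred_def N_def)
  qed
  have le: "\<And>m. emeasure (draw_space n) N \<le> ennreal (R n tau m 0)"
  proof -
    fix m
    have "emeasure (draw_space n) N \<le> emeasure (draw_space n) {\<omega>. card (set (stake m \<omega>)) < tau}"
      by (rule emeasure_mono[OF _ sets_c]) (auto simp: N_def)
    then show "emeasure (draw_space n) N \<le> ennreal (R n tau m 0)" using key0[OF n tn] by simp
  qed
  have "(\<lambda>m. R n tau m 0) \<longlonglongrightarrow> 0"
    by (rule summable_LIMSEQ_zero[OF R_summable[OF n tn]])
  then have "(\<lambda>m. ennreal (R n tau m 0)) \<longlonglongrightarrow> ennreal 0"
    by (rule tendsto_ennrealI)
  then have "emeasure (draw_space n) N \<le> ennreal 0"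
    using le by (intro LIMSEQ_le_const) auto
  then have N0: "emeasure (draw_space n) N = 0" by simp
  show ?thesis
  proof (rule AE_I[OF _ N0 Nm])
    show "{\<omega> \<in> space (draw_space n). \<not> (\<exists>t. card (set (stake t \<omega>)) = tau)} \<subseteq> N"
  proof (rule subsetI)
    fix \<omega> assume "\<omega> \<in> {\<omega> \<in> space (draw_space n). \<not> (\<exists>t. card (set (stake t \<omega>)) = tau)}"
    then have h: "\<not> (\<exists>t. card (set (stake t \<omega>)) = tau)" by simp
    have "\<forall>t. card (set (stake t \<omega>)) < tau"
    proof
      fix t show "card (set (stake t \<omega>)) < tau"
      proof (rule ccontr)
        assume "\<not> card (set (stake t \<omega>)) < tau"
        then have "tau \<le> card (set (stake t \<omega>))" by simp
        from c_ivt[OF this] h show False by blast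
      qed
    qed
    then show "\<omega> \<in> N" by (simp add: N_def)
  qed
  qed
qed

lemma ennreal_as_suminf: "ennreal (real k) = (\<Sum>m. if m < k then 1 else (0::ennreal))"
proof -
  have "(\<Sum>m. if m < k then 1 else (0::ennreal)) = (\<Sum>m\<in>{..<k}. if m < k then 1 else 0)"
    by (rule suminf_finite) auto
  then show ?thesis by (simp add: ennreal_of_nat_eq_real_of_nat)
qed

theorem expectation:
  assumes n: "0 < n" and tn: "tau \<le> n"
  shows "(\<integral>\<^sup>+ \<omega>. ennreal (real (draws_to_complete tau \<omega>)) \<partial>draw_space n) = ennreal (E n tau 0)"
proof -
  have "(\<integral>\<^sup>+ \<omega>. ennreal (real (draws_to_complete tau \<omega>)) \<partial>draw_space n)
      = (\<integral>\<^sup>+ \<omega>. (\<Sum>m. if m < draws_to_complete tau \<omega> then 1 else (0::ennreal)) \<partial>draw_space n)"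
    by (simp only: ennreal_as_suminf)
  also have "\<dots> = (\<Sum>m. \<integral>\<^sup>+ \<omega>. (if m < draws_to_complete tau \<omega> then 1 else (0::ennreal)) \<partial>draw_space n)"
    by (rule nn_integral_suminf) (rule T_meas_fun)
  also have "\<dots> = (\<Sum>m. ennreal (R n tau m 0))"
  proof (rule suminf_cong)
    fix m
    have "(\<integral>\<^sup>+ \<omega>. (if m < draws_to_complete tau \<omega> then 1 else (0::ennreal)) \<partial>draw_space n)
        = (\<integral>\<^sup>+ \<omega>. indicator {\<omega>. card (set (stake m \<omega>)) < tau} \<omega> \<partial>draw_space n)"
    proof (rule nn_integral_cong_AE, rule AE_mp[OF AE_reach[OF n tn]], rule AE_I2, rule impI)
      fix \<omega> :: "nat stream" assume h: "\<exists>t. card (set (stake t \<omega>)) = tau"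
      show "(if m < draws_to_complete tau \<omega> then 1 else 0) = indicator {\<omega>. card (set (stake m \<omega>)) < tau} \<omega>"
        using T_gt[OF h, of m] by (simp split: split_indicator)
    qed
    also have "\<dots> = ennreal (R n tau m 0)"
      using key0[OF n tn] sets_c by simp
    finally show "(\<integral>\<^sup>+ \<omega>. (if m < draws_to_complete tau \<omega> then 1 else (0::ennreal)) \<partial>draw_space n) = ennreal (R n tau m 0)" .
  qed
  also have "\<dots> = ennreal (E n tau 0)"
    unfolding E_def by (rule suminf_ennreal2) (auto intro: R_nonneg[OF tn] R_summable[OF n tn])
  finally show ?thesis .
qed

theorem prob_bound:
  assumes n: "0 < n" and tn: "tau \<le> n"
  shows "1 - R n tau m 0 \<le> measure (draw_space n) {\<omega> \<in> space (draw_space n). draws_to_complete tau \<omega> \<le> m}"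
proof -
  interpret S: prob_space "draw_space n" by (rule prob_draw)
  have Bm: "{\<omega> \<in> space (draw_space n). draws_to_complete tau \<omega> \<le> m} \<in> sets (draw_space n)"
  proof -
    have "Measurable.pred (draw_space n) (\<lambda>\<omega>. draws_to_complete tau \<omega> \<le> m)"
      by (rule measurable_compose[OF meas_T]) simp
    then show ?thesis by (simp add: pred_def)
  qed
  have A: "{\<omega>. card (set (stake m \<omega>)) < tau} \<in> sets (draw_space n)" by (rule sets_c)
  have mA: "measure (draw_space n) {\<omega>. card (set (stake m \<omega>)) < tau} = R n tau m 0"
    using key0[OF n tn] R_nonneg[OF tn] by (simp add: measure_def)
  have "1 - R n tau m 0 = measure (draw_space n) (space (draw_space n) - {\<omega>. card (set (stake m \<omega>)) < tau})"
    using S.prob_compl[OF A] mA by simp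
  also have "\<dots> \<le> measure (draw_space n) {\<omega> \<in> space (draw_space n). draws_to_complete tau \<omega> \<le> m}"
    by (rule S.finite_measure_mono[OF _ Bm]) (auto simp: T_le not_less)
  finally show ?thesis .
qed

lemma le_ln_of_exp: "exp x \<le> y \<Longrightarrow> x \<le> ln (y::real)"
  using ln_mono[of "exp x" y] by simp

lemma ln_le_of_exp: "0 < y \<Longrightarrow> y \<le> exp x \<Longrightarrow> ln (y::real) \<le> x"
  using ln_mono[of y "exp x"] by simp

lemma exp_le_inv: assumes "0 \<le> x" "x < 1" shows "exp (x::real) \<le> 1 / (1 - x)"
proof -
  have "1 - x \<le> exp (-x)" using exp_ge_add_one_self[of "-x"] by simp
  then have "exp x * (1 - x) \<le> exp x * exp (-x)" by (intro mult_left_mono) auto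
  also have "\<dots> = 1" by (simp add: exp_minus)
  finally show ?thesis using assms by (simp add: field_simps)
qed

lemma exp_pow10: "exp (x::real) = exp (x / 10) ^ 10"
  using exp_of_nat_mult[of 10 "x/10"] by simp

lemma ln2_ge: "2/3 \<le> ln (2::real)"
proof (rule le_ln_of_exp)
  have "exp (2/3::real) = exp (1/15) ^ 10" using exp_pow10[of "2/3"] by simp
  also have "\<dots> \<le> (1 / (1 - 1/15)) ^ 10" by (intro power_mono exp_le_inv) auto
  also have "\<dots> \<le> 2" by (simp add: power_divide)
  finally show "exp (2/3::real) \<le> 2" .
qed

lemma ln43_ge: "7/25 \<le> ln (4/3::real)"
proof (rule le_ln_of_exp)
  have "exp (7/25::real) = exp (7/250) ^ 10" using exp_pow10[of "7/25"] by simp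
  also have "\<dots> \<le> (1 / (1 - 7/250)) ^ 10" by (intro power_mono exp_le_inv) auto
  also have "\<dots> \<le> 4/3" by (simp add: power_divide)
  finally show "exp (7/25::real) \<le> 4/3" .
qed

lemma ln163_le: "ln (16/3::real) \<le> 2"
proof (rule ln_le_of_exp)
  have "(16/3::real) \<le> (1 + 2/10) ^ 10" by (simp add: power_divide)
  also have "\<dots> \<le> exp (2/10) ^ 10" by (intro power_mono) (use exp_ge_add_one_self[of "2/10::real"] in auto)
  also have "\<dots> = exp 2" using exp_pow10[of 2] by simp
  finally show "(16/3::real) \<le> exp 2" .
qed simp

definition kf :: "real \<Rightarrow> real" where "kf c = c * ln c - (1 - c) * ln (1 - c)"

lemma k_le_cln: fixes c :: real assumes "0 < c" "c < 1" shows "kf c \<le> c * ln c + c"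
proof -
  have "ln (1 / (1 - c)) \<le> 1 / (1 - c) - 1" using assms by (intro ln_le_minus_one) simp
  then have "- ln (1 - c) \<le> c / (1 - c)" using assms by (simp add: ln_div field_simps)
  then have "(1 - c) * (- ln (1 - c)) \<le> (1 - c) * (c / (1 - c))" using assms by (intro mult_left_mono) auto
  then have "- ((1 - c) * ln (1 - c)) \<le> c" using assms by simp
  then show ?thesis unfolding kf_def by linarith
qed

lemma k_deriv: fixes x :: real assumes "0 < x" "x < 1" shows "DERIV kf x :> ln x + ln (1 - x) + 2"
  unfolding kf_def[abs_def] using assms
  by (auto intro!: derivative_eq_intros simp: field_simps)

lemma kp_upper: fixes x :: real assumes "0 < x" "x < 1" shows "ln x + ln (1 - x) + 2 \<le> 2/3"
proof -
  have eq: "1/4 - x * (1 - x) = (x - 1/2)^2" by (simp add: power2_eq_square algebra_simps)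
  have "x * (1 - x) \<le> 1/4" using eq zero_le_power2[of "x - 1/2"] by linarith
  then have "ln (x * (1 - x)) \<le> ln (1/4)" using assms by (intro ln_mono) auto
  moreover have "ln (1/4::real) = - 2 * ln 2"
    by (simp add: ln_div) (metis ln_realpow[of 2 2] numeral_Bit0 power2_eq_square mult_2 of_nat_numeral  numeral_One)
  ultimately show ?thesis using ln2_ge assms by (simp add: ln_mult)
qed

lemma kp_lower: fixes x :: real assumes "1/4 \<le> x" "x \<le> 1/2" shows "0 \<le> ln x + ln (1 - x) + 2"
proof -
  have eq: "x * (1 - x) - 3/16 = (x - 1/4) * (3/4 - x)" by (simp add: field_simps)
  have "0 \<le> (x - 1/4) * (3/4 - x)" using assms by (intro mult_nonneg_nonneg) auto
  then have "3/16 \<le> x * (1 - x)" using eq by linarith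
  then have "ln (3/16) \<le> ln (x * (1 - x))" using assms by (intro ln_mono) auto
  moreover have "ln (3/16::real) = - ln (16/3)" by (simp add: ln_div)
  ultimately show ?thesis using ln163_le assms by (simp add: ln_mult)
qed

lemma kf_half: "kf (1/2) = 0" by (simp add: kf_def)

lemma ln_quarter: "ln (1/4::real) \<le> -4/3" and ln_16th: "ln (1/16::real) \<le> -8/3"
proof -
  have a: "ln (4::real) = 2 * ln 2" using ln_realpow[of 2 2] by simp
  have b: "ln (16::real) = 4 * ln 2" using ln_realpow[of 2 4] by simp
  show "ln (1/4::real) \<le> -4/3" using a ln2_ge by (simp add: ln_div)
  show "ln (1/16::real) \<le> -8/3" using b ln2_ge by (simp add: ln_div)
qed

lemma h_bound:
  fixes c :: real
  assumes c1: "1/50 < c" and c2: "c < 3/5"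
  shows "kf c - 7/50 * c \<le> -1/60"
proof -
  consider "c \<le> 1/16" | "1/16 < c \<and> c \<le> 1/4" | "1/4 < c \<and> c \<le> 1/2" | "1/2 < c" by linarith
  then show ?thesis
  proof cases
    case 1
    have "ln c \<le> ln (1/16)" using 1 c1 by (intro ln_mono) auto
    then have "ln c \<le> -8/3" using ln_16th by linarith
    then have "c * ln c \<le> c * (-8/3)" using c1 by (intro mult_left_mono) auto
    then show ?thesis using k_le_cln[of c] c1 c2 by linarith
  next
    case 2
    have "ln c \<le> ln (1/4)" using 2 c1 by (intro ln_mono) auto
    then have "ln c \<le> -4/3" using ln_quarter by linarith
    then have "c * ln c \<le> c * (-4/3)" using c1 by (intro mult_left_mono) auto
    then show ?thesis using k_le_cln[of c] c1 c2 2 by linarith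
  next
    case 3
    have "kf c \<le> 0"
    proof (cases "c = 1/2")
      case True then show ?thesis unfolding True kf_half by simp
    next
      case False
      then have lt: "c < 1/2" using 3 by simp
      have d: "\<And>x. c \<le> x \<Longrightarrow> x \<le> 1/2 \<Longrightarrow> DERIV kf x :> ln x + ln (1 - x) + 2"
        using 3 by (intro k_deriv) auto
      obtain z where z: "c < z" "z < 1/2" "kf (1/2) - kf c = (1/2 - c) * (ln z + ln (1 - z) + 2)"
        using MVT2[OF lt d] by blast
      have "0 \<le> (1/2 - c) * (ln z + ln (1 - z) + 2)"
        using kp_lower[of z] z 3 by (intro mult_nonneg_nonneg) auto
      then show ?thesis using z kf_half by linarith
    qed
    then show ?thesis using 3 by linarith
  next
    case 4
    have d: "\<And>x. 1/2 \<le> x \<Longrightarrow> x \<le> c \<Longrightarrow> DERIV kf x :> ln x + ln (1 - x) + 2"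
      using c2 by (intro k_deriv) auto
    obtain z where z: "1/2 < z" "z < c" "kf c - kf (1/2) = (c - 1/2) * (ln z + ln (1 - z) + 2)"
      using MVT2[OF 4 d] by blast
    have "(c - 1/2) * (ln z + ln (1 - z) + 2) \<le> (c - 1/2) * (2/3)"
      using kp_upper[of z] z c2 4 by (intro mult_left_mono) auto
    moreover have "(c - 1/2) * (2/3) = 2/3 * c - 1/3" by (simp add: field_simps)
    ultimately show ?thesis using z kf_half c2 by linarith
  qed
qed

definition Phi :: "real \<Rightarrow> real \<Rightarrow> real" where
  "Phi y x = - ((1 - x) * ln (1 - x)) + (y - x) * ln (y - x)"

lemma Phi_deriv: assumes "x < y" "y \<le> 1" shows "DERIV (Phi y) x :> ln (1 - x) - ln (y - x)"
proof -
  have h: "1 - x \<noteq> 0" "y - x \<noteq> 0" using assms by auto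
  show ?thesis unfolding Phi_def[abs_def] using assms
    by (auto intro!: derivative_eq_intros simp: h)
qed

lemma Phi_step:
  assumes a0: "0 \<le> a" and ab: "a < b" and b_y: "b < y" and y1: "y \<le> 1"
  shows "(b - a) * (ln (1 - a) - ln (y - a)) \<le> Phi y b - Phi y a"
proof -
  have d: "\<And>x. a \<le> x \<Longrightarrow> x \<le> b \<Longrightarrow> DERIV (Phi y) x :> ln (1 - x) - ln (y - x)"
    using b_y y1 by (intro Phi_deriv) auto
  obtain z where z: "a < z" "z < b" "Phi y b - Phi y a = (b - a) * (ln (1 - z) - ln (y - z))"
    using MVT2[OF ab d] by blast
  have pos: "0 < 1 - a" "0 < y - a" "0 < 1 - z" "0 < y - z" using z b_y y1 ab by auto
  have eq: "(1 - z) * (y - a) - (1 - a) * (y - z) = (z - a) * (1 - y)" by (simp add: algebra_simps)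
  have "0 \<le> (z - a) * (1 - y)" using z y1 by (intro mult_nonneg_nonneg) auto
  then have "(1 - a) * (y - z) \<le> (1 - z) * (y - a)" using eq by linarith
  then have "(1 - a) / (y - a) \<le> (1 - z) / (y - z)" using pos by (simp add: divide_simps)
  then have "ln ((1 - a) / (y - a)) \<le> ln ((1 - z) / (y - z))" using pos by (intro ln_mono) auto
  then have "ln (1 - a) - ln (y - a) \<le> ln (1 - z) - ln (y - z)" using pos by (simp add: ln_div)
  then have "(b - a) * (ln (1 - a) - ln (y - a)) \<le> (b - a) * (ln (1 - z) - ln (y - z))"
    using ab by (intro mult_left_mono) auto
  then show ?thesis using z by simp
qed

lemma fail_bound:
  assumes n: "0 < n" and tn: "tau \<le> n" and lo: "0.02 * real n < real tau" and hi: "real tau < 0.6 * real n"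
  shows "R n tau (2 * tau) 0 \<le> exp (- real n / 60)"
proof -
  define c where "c = real tau / real n"
  define y where "y = 3 / 2 * c"
  have nr: "0 < real n" using n by simp
  have c1: "1/50 < c" and c2: "c < 3/5" using lo hi nr by (auto simp: c_def field_simps)
  have y0: "0 < y" and y1: "y \<le> 1" using c1 c2 by (auto simp: y_def)
  have yj: "\<And>j. j < tau \<Longrightarrow> real j / real n < y"
  proof -
    fix j assume "j < tau"
    then have "real j / real n < c" using nr by (simp add: c_def divide_strict_right_mono)
    then show "real j / real n < y" using c1 by (simp add: y_def)
  qed
  define q where "q j = real j / real n" for j
  define g where "g j = y ^ 2 * ((1 - q j) / (y - q j))" for j
  have qpos: "\<And>j. j < tau \<Longrightarrow> 0 < y - q j" using yj by (simp add: q_def)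
  have q1: "\<And>j. j < tau \<Longrightarrow> q j < 1" using yj y1 by (simp add: q_def) (smt (verit))
  have gpos: "\<And>j. j < tau \<Longrightarrow> 0 < g j" using qpos q1 y0 by (simp add: g_def)
  have "R n tau (2 * tau) 0 \<le> F n tau y 0 * y ^ (2 * tau)"
    by (rule R_chernoff[OF n tn y1 y0 yj])
  also have "F n tau y 0 * y ^ (2 * tau) = (\<Prod>j<tau. g j)"
  proof -
    have "(\<Prod>j<tau. g j) = (\<Prod>j<tau. y ^ 2) * (\<Prod>j<tau. (1 - q j) / (y - q j))"
      unfolding g_def by (rule prod.distrib)
    also have "(\<Prod>j<tau. y ^ 2) = y ^ (2 * tau)" by (simp add: power_mult)
    also have "(\<Prod>j<tau. (1 - q j) / (y - q j)) = F n tau y 0"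
      unfolding F_def q_def by (simp add: atLeast0LessThan)
    finally show ?thesis by simp
  qed
  also have "\<dots> = exp (\<Sum>j<tau. ln (g j))"
  proof -
    have "exp (\<Sum>j<tau. ln (g j)) = (\<Prod>j<tau. exp (ln (g j)))" by (rule exp_sum) simp
    also have "\<dots> = (\<Prod>j<tau. g j)" using gpos by (intro prod.cong) auto
    finally show ?thesis by simp
  qed
  also have "\<dots> \<le> exp (- real n / 60)"
  proof (subst exp_le_cancel_iff)
    have step: "\<And>j. j < tau \<Longrightarrow> ln (g j) \<le> 2 * ln y + real n * (Phi y (q (Suc j)) - Phi y (q j))"
    proof -
      fix j assume j: "j < tau"
      have "(q (Suc j) - q j) * (ln (1 - q j) - ln (y - q j)) \<le> Phi y (q (Suc j)) - Phi y (q j)"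
      proof (rule Phi_step[OF _ _ _ y1])
        show "0 \<le> q j" by (simp add: q_def)
        show "q j < q (Suc j)" using nr by (simp add: q_def divide_strict_right_mono)
        have "q (Suc j) \<le> c" using j nr by (simp add: q_def c_def divide_right_mono)
        then show "q (Suc j) < y" using c1 by (simp add: y_def)
      qed
      moreover have "q (Suc j) - q j = 1 / real n" using nr by (simp add: q_def field_simps)
      ultimately have "(ln (1 - q j) - ln (y - q j)) / real n \<le> Phi y (q (Suc j)) - Phi y (q j)" by simp
      then have "ln (1 - q j) - ln (y - q j) \<le> real n * (Phi y (q (Suc j)) - Phi y (q j))"
        using nr by (simp add: field_simps)
      moreover have "ln (g j) = 2 * ln y + (ln (1 - q j) - ln (y - q j))"
        using qpos[OF j] q1[OF j] y0 by (simp add: g_def ln_mult ln_div ln_realpow)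
      ultimately show "ln (g j) \<le> 2 * ln y + real n * (Phi y (q (Suc j)) - Phi y (q j))" by simp
    qed
    have "(\<Sum>j<tau. ln (g j)) \<le> (\<Sum>j<tau. 2 * ln y + real n * (Phi y (q (Suc j)) - Phi y (q j)))"
      by (rule sum_mono) (rule step, simp)
    also have "\<dots> = real tau * (2 * ln y) + real n * (Phi y (q tau) - Phi y (q 0))"
      using sum_lessThan_telescope[of "\<lambda>j. Phi y (q j)" tau] by (simp add: sum.distrib sum_distrib_left[symmetric])
    also have "\<dots> = real n * (kf c + c / 2 * (ln 3 - 2 * ln 2))"
    proof -
      have qt: "q tau = c" and q0: "q 0 = 0" by (simp_all add: q_def c_def)
      have tau_eq: "real tau = real n * c" using nr by (simp add: c_def)
      have c0: "0 < c" using c1 by simp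
      have l1: "ln y = ln 3 + ln c - ln 2" using c0 by (simp add: y_def ln_mult ln_div)
      have l2: "ln (c / 2) = ln c - ln 2" using c0 by (simp add: ln_div)
      have ymc: "y - c = c / 2" by (simp add: y_def)
      have "real tau * (2 * ln y) + real n * (Phi y (q tau) - Phi y (q 0))
          = real n * (c * (2 * ln y) + (- ((1 - c) * ln (1 - c)) + (y - c) * ln (y - c)) - y * ln y)"
        unfolding qt q0 tau_eq Phi_def by (simp add: algebra_simps)
      also have "\<dots> = real n * (kf c + c / 2 * (ln 3 - 2 * ln 2))"
        unfolding kf_def by (simp only: l1 ymc l2) (simp add: y_def field_simps)
      finally show ?thesis .
    qed
    also have "\<dots> \<le> real n * (-1/60)"
    proof (rule mult_left_mono)
      have "ln 3 - 2 * ln 2 = - ln (4/3::real)"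
      proof -
        have "ln (4::real) = 2 * ln 2" using ln_realpow[of 2 2] by simp
        then show ?thesis by (simp add: ln_div)
      qed
      then have "c / 2 * (ln 3 - 2 * ln 2) \<le> c / 2 * (- 7/25)"
        using ln43_ge c1 by (intro mult_left_mono) auto
      then show "kf c + c / 2 * (ln 3 - 2 * ln 2) \<le> -1/60" using h_bound[OF c1 c2] by linarith
    qed (use nr in simp)
    finally show "(\<Sum>j<tau. ln (g j)) \<le> - real n / 60" by simp
  qed
  finally show ?thesis .
qed

theorem proposition1:
  fixes n tau :: nat
  assumes "0 < n" and "tau \<le> n"
  shows "((\<integral>\<^sup>+ \<omega>. ennreal (real (draws_to_complete tau \<omega>)) \<partial>draw_space n)
           = ennreal (real tau + (\<Sum>i=1..tau-1. real i / (real n - real i)))) \<and>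
         (0.02 * real n < real tau \<and> real tau < 0.6 * real n \<longrightarrow>
         measure (draw_space n) {\<omega> \<in> space (draw_space n). draws_to_complete tau \<omega> \<le> 2 * tau}
           \<ge> 1 - exp (- real n / 60))"
proof
  have E0: "E n tau 0 = (\<Sum>i\<in>{0..<tau}. real n / (real n - real i))"
    by (rule E_formula[OF assms]) simp
  also have "\<dots> = (\<Sum>i\<in>{0..<tau}. 1 + real i / (real n - real i))"
  proof (rule sum.cong[OF refl])
    fix i assume "i \<in> {0..<tau}"
    then have "real i < real n" using assms by simp
    then show "real n / (real n - real i) = 1 + real i / (real n - real i)" by (simp add: field_simps)
  qed
  also have "\<dots> = real tau + (\<Sum>i\<in>{0..<tau}. real i / (real n - real i))"
    by (simp add: sum.distrib)
  also have "(\<Sum>i\<in>{0..<tau}. real i / (real n - real i)) = (\<Sum>i=1..tau-1. real i / (real n - real i))"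
  proof (cases "tau = 0")
    case True then show ?thesis by simp
  next
    case False
    then have "(\<Sum>i\<in>{0..<tau}. real i / (real n - real i)) = 0 / (real n - 0) + (\<Sum>i\<in>{Suc 0..<tau}. real i / (real n - real i))"
      by (subst sum.atLeast_Suc_lessThan) auto
    also have "{Suc 0..<tau} = {1..tau-1}" using False by auto
    finally show ?thesis by simp
  qed
  finally have E0': "E n tau 0 = real tau + (\<Sum>i=1..tau-1. real i / (real n - real i))" .
  show "(\<integral>\<^sup>+ \<omega>. ennreal (real (draws_to_complete tau \<omega>)) \<partial>draw_space n)
           = ennreal (real tau + (\<Sum>i=1..tau-1. real i / (real n - real i)))"
    using expectation[OF assms] E0' by simp
next
  show "0.02 * real n < real tau \<and> real tau < 0.6 * real n \<longrightarrow>
         measure (draw_space n) {\<omega> \<in> space (draw_space n). draws_to_complete tau \<omega> \<le> 2 * tau}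
           \<ge> 1 - exp (- real n / 60)"
  proof
    assume h: "0.02 * real n < real tau \<and> real tau < 0.6 * real n"
    have "R n tau (2 * tau) 0 \<le> exp (- real n / 60)"
      using fail_bound[OF assms] h by blast
    moreover have "1 - R n tau (2 * tau) 0 \<le> measure (draw_space n) {\<omega> \<in> space (draw_space n). draws_to_complete tau \<omega> \<le> 2 * tau}"
      by (rule prob_bound[OF assms])
    ultimately show "measure (draw_space n) {\<omega> \<in> space (draw_space n). draws_to_complete tau \<omega> \<le> 2 * tau}
           \<ge> 1 - exp (- real n / 60)" by linarith
  qed
qed

end
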